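(* Let $V:\mathbb{R}^d\to[0,\infty)$ be measurable, locally bounded, not almost everywhere zero, and satisfy $\|V\|_{L^\infty(B(x,2r))}\le D\|V\|_{L^\infty(B(x,r))}$ for all $x\in\mathbb{R}^d$, $r>0$, with $D<\infty$ a constant. Then $$\frac{\rho_V(x)^{-2}}{4D}\le\|V\|_{L^\infty(B(x,\rho_V(x)))}\le\rho_V(x)^{-2}\qquad\text{for all }x\in\mathbb{R}^d.$$
   Context: For such $V$, $\rho_V(x):=\sup\{r>0: r^2\|V\|_{L^\infty(B(x,r))}\le1\}$, which is positive and finite for every $x$. $B(x,r)$ denotes the Euclidean open ball. *)

theory Defs
  imports "HOL-Analysis.Analysis" "HOL-Probability.Essential_Supremum"
begin

definition Linf_ball :: "('a::euclidean_space \<Rightarrow> real) \<Rightarrow> 'a \<Rightarrow> real \<Rightarrow> real" where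
  "Linf_ball V x r = real_of_ereal (esssup (restrict_space lebesgue (ball x r)) (\<lambda>y. ereal \<bar>V y\<bar>))"

definition rhoV :: "('a::euclidean_space \<Rightarrow> real) \<Rightarrow> 'a \<Rightarrow> real" where
  "rhoV V x = Sup {r. r > 0 \<and> r^2 * Linf_ball V x r \<le> 1}"

end

theory Submission imports Defs begin

lemma ball_pos: "r > 0 \<Longrightarrow> emeasure lebesgue (ball (c::'a::euclidean_space) r) \<noteq> 0"
proof
  assume "r > 0" "emeasure lebesgue (ball c r) = 0"
  hence "emeasure lborel (ball c r) = 0" by (simp add: emeasure_completion)
  hence "measure lborel (ball c r) = 0" by (simp add: measure_def)
  with content_ball_pos[OF \<open>r > 0\<close>, of c] show False by simp
qed

context
  fixes V :: "'a::euclidean_space \<Rightarrow> real" and x :: 'a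
  assumes meas: "V \<in> borel_measurable lebesgue"
    and nonneg: "\<And>y. V y \<ge> 0"
    and locbdd: "\<And>K. compact K \<Longrightarrow> bounded (V ` K)"
begin

definition "EE r = esssup (restrict_space lebesgue (ball x r)) (\<lambda>y. ereal \<bar>V y\<bar>)"

lemma gmeas: "(\<lambda>y. ereal \<bar>V y\<bar>) \<in> borel_measurable (restrict_space lebesgue (ball x r))"
  using meas by (intro measurable_restrict_space1) measurable

lemma sp: "space (restrict_space lebesgue (ball x r)) = ball x r"
  by (simp add: space_restrict_space)

lemma setm: "{y \<in> ball x r. z < V y} \<in> sets lebesgue"
proof -
  have "{y \<in> ball x r. z < V y} = ball x r \<inter> {y \<in> space lebesgue. z < V y}" by auto
  also have "\<dots> \<in> sets lebesgue"
  proof (rule sets.Int)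
    show "ball x r \<in> sets lebesgue" by simp
    show "{y \<in> space lebesgue. z < V y} \<in> sets lebesgue" using meas by measurable
  qed
  finally show ?thesis .
qed

lemma EE_bounds: assumes "r > 0" shows "0 \<le> EE r" "EE r < \<infinity>"
proof -
  have "emeasure (restrict_space lebesgue (ball x r)) (space (restrict_space lebesgue (ball x r))) \<noteq> 0"
    using ball_pos[OF assms, of x] by (simp add: sp emeasure_restrict_space)
  hence "esssup (restrict_space lebesgue (ball x r)) (\<lambda>y. (0::ereal)) = 0"
    by (rule esssup_const)
  moreover have "esssup (restrict_space lebesgue (ball x r)) (\<lambda>y. (0::ereal)) \<le> EE r"
    unfolding EE_def by (rule esssup_mono) auto
  ultimately show "0 \<le> EE r" by simp
  obtain B where B0: "\<forall>y\<in>cball x r. \<bar>V y\<bar> \<le> B"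
    using locbdd[OF compact_cball[of x r]] unfolding bounded_iff by (auto simp: real_norm_def)
  hence B: "\<And>y. y \<in> cball x r \<Longrightarrow> \<bar>V y\<bar> \<le> B" by blast
  have "EE r \<le> ereal B"
    unfolding EE_def
    by (rule esssup_I[OF gmeas], rule AE_I2) (auto simp: sp intro!: B)
  moreover have "ereal B < \<infinity>" by simp
  ultimately show "EE r < \<infinity>" by (rule order.strict_trans1)
qed

lemma EE_eq: assumes "r > 0" shows "ereal (Linf_ball V x r) = EE r" "Linf_ball V x r \<ge> 0"
proof -
  have a: "0 \<le> EE r" "EE r < \<infinity>" using EE_bounds[OF assms] by auto
  hence "\<bar>EE r\<bar> \<noteq> \<infinity>" by auto
  hence "ereal (real_of_ereal (EE r)) = EE r" by (simp add: ereal_real)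
  thus "ereal (Linf_ball V x r) = EE r" unfolding Linf_ball_def EE_def[symmetric] .
  show "Linf_ball V x r \<ge> 0" unfolding Linf_ball_def EE_def[symmetric] using a(1) by (rule real_of_ereal_pos)
qed

lemma gt_iff: assumes "r > 0"
  shows "z < Linf_ball V x r \<longleftrightarrow> 0 < emeasure lebesgue {y \<in> ball x r. z < V y}"
proof -
  let ?R = "restrict_space lebesgue (ball x r)"
  have sete: "{y \<in> space ?R. ereal z < ereal \<bar>V y\<bar>} = {y \<in> ball x r. z < V y}"
    using nonneg by (auto simp: sp)
  have em: "emeasure ?R {y \<in> ball x r. z < V y} = emeasure lebesgue {y \<in> ball x r. z < V y}"
    by (subst emeasure_restrict_space) auto
  have "z < Linf_ball V x r \<longleftrightarrow> ereal z < EE r" using EE_eq(1)[OF assms, symmetric] by simp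
  also have "\<dots> \<longleftrightarrow> 0 < emeasure lebesgue {y \<in> ball x r. z < V y}"
  proof
    assume "ereal z < EE r"
    from esssup_pos_measure[OF gmeas this[unfolded EE_def]] show "0 < emeasure lebesgue {y \<in> ball x r. z < V y}"
      using sete em by simp
  next
    assume pos: "0 < emeasure lebesgue {y \<in> ball x r. z < V y}"
    show "ereal z < EE r"
    proof (rule ccontr)
      assume "\<not> ereal z < EE r"
      hence le: "EE r \<le> ereal z" by simp
      have "EE r < ereal \<bar>V y\<bar>" if "z < V y" for y
      proof -
        have "ereal z < ereal \<bar>V y\<bar>" using that nonneg[of y] by simp
        with le show ?thesis by (rule order.strict_trans1)
      qed
      hence "{y \<in> ball x r. z < V y} \<subseteq> {y \<in> space ?R. EE r < ereal \<bar>V y\<bar>}"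
        by (auto simp: sp)
      moreover have "{y \<in> space ?R. EE r < ereal \<bar>V y\<bar>} \<in> sets ?R" using gmeas[of r] by measurable
      ultimately have "emeasure ?R {y \<in> ball x r. z < V y} \<le> emeasure ?R {y \<in> space ?R. EE r < ereal \<bar>V y\<bar>}"
        by (intro emeasure_mono)
      also have "\<dots> = 0" unfolding EE_def by (rule esssup_zero_measure)
      finally show False using pos em by simp
    qed
  qed
  finally show ?thesis .
qed

lemma mono: assumes "0 < r" "r \<le> s" shows "Linf_ball V x r \<le> Linf_ball V x s"
proof (rule ccontr)
  assume "\<not> ?thesis"
  then obtain z where z: "Linf_ball V x s < z" "z < Linf_ball V x r" using dense by (meson not_le)
  hence "0 < emeasure lebesgue {y \<in> ball x r. z < V y}" using gt_iff assms by simp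
  also have "\<dots> \<le> emeasure lebesgue {y \<in> ball x s. z < V y}"
    using assms by (intro emeasure_mono setm) auto
  finally have "z < Linf_ball V x s" using gt_iff assms by simp
  with z show False by simp
qed

end

theorem mainTheorem9:
  fixes V :: "'a::euclidean_space \<Rightarrow> real" and D :: real
  assumes meas: "V \<in> borel_measurable lebesgue"
    and nonneg: "\<And>y. V y \<ge> 0"
    and locbdd: "\<And>K. compact K \<Longrightarrow> bounded (V ` K)"
    and nonzero: "\<not> (AE y in lebesgue. V y = 0)"
    and doubling: "\<And>x r. r > 0 \<Longrightarrow> Linf_ball V x (2 * r) \<le> D * Linf_ball V x r"
  shows "\<forall>x. rhoV V x powr (-2) / (4 * D) \<le> Linf_ball V x (rhoV V x)
             \<and> Linf_ball V x (rhoV V x) \<le> rhoV V x powr (-2)"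
proof
  fix x :: 'a
  define f where "f r = Linf_ball V x r" for r
  define S where "S = {r. r > 0 \<and> r^2 * f r \<le> 1}"
  have rho_def: "rhoV V x = Sup S" unfolding rhoV_def S_def f_def by simp
  have gt: "z < f r \<longleftrightarrow> 0 < emeasure lebesgue {y \<in> ball x r. z < V y}" if "0 < r" for r z
    unfolding f_def by (rule gt_iff[of V, OF meas nonneg _ that]) (rule locbdd)
  have mn: "f r \<le> f s" if "0 < r" "r \<le> s" for r s
    unfolding f_def by (rule mono[of V, OF meas nonneg _ that]) (rule locbdd)
  have sm: "{y \<in> ball x r. z < V y} \<in> sets lebesgue" for r z
    by (rule setm[of V, OF meas nonneg]) (rule locbdd)
  have fnn: "f r \<ge> 0" if "r > 0" for r
    unfolding f_def by (rule EE_eq(2)[of V, OF meas nonneg _ that]) (rule locbdd)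
  obtain B where B0: "\<forall>y\<in>cball x 1. \<bar>V y\<bar> \<le> B"
    using locbdd[OF compact_cball[of x 1]] unfolding bounded_iff by (auto simp: real_norm_def)
  have "\<bar>V x\<bar> \<le> B" using B0 by simp
  hence Bnn: "B \<ge> 0" using abs_ge_zero[of "V x"] by linarith
  define r0 where "r0 = 1 / (B + 1)"
  have r0pos: "r0 > 0" and r0le: "r0 \<le> 1" using Bnn by (auto simp: r0_def)
  have "f r0 \<le> B"
  proof (rule ccontr)
    assume "\<not> f r0 \<le> B"
    hence "0 < emeasure lebesgue {y \<in> ball x r0. B < V y}" using gt[OF r0pos, of B] by simp
    moreover have "V y \<le> B" if "y \<in> ball x r0" for y
    proof -
      have "y \<in> cball x 1" using that r0le by auto
      hence "\<bar>V y\<bar> \<le> B" using B0 by blast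
      thus ?thesis using nonneg[of y] by simp
    qed
    hence "{y \<in> ball x r0. B < V y} = {}" by force
    ultimately show False by (simp only:) simp
  qed
  hence "r0^2 * f r0 \<le> r0^2 * B" by (simp add: mult_left_mono)
  also have "r0^2 * B \<le> 1"
  proof -
    have "B \<le> (B + 1)^2" using Bnn by (simp add: power2_eq_square algebra_simps)
    thus ?thesis using Bnn by (simp add: r0_def power_divide)
  qed
  finally have r0S: "r0 \<in> S" using r0pos by (simp add: S_def)
  have "\<exists>n. 0 < emeasure lebesgue {y \<in> ball x (real n). 0 < V y}"
  proof (rule ccontr)
    assume "\<not> ?thesis"
    hence "\<And>n. {y \<in> ball x (real n). 0 < V y} \<in> null_sets lebesgue"
      using sm by (simp add: null_sets_def not_gr_zero)
    hence N: "(\<Union>n. {y \<in> ball x (real n). 0 < V y}) \<in> null_sets lebesgue" by blast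
    have "{y \<in> space lebesgue. \<not> V y = 0} \<subseteq> (\<Union>n. {y \<in> ball x (real n). 0 < V y})"
    proof
      fix y assume "y \<in> {y \<in> space lebesgue. \<not> V y = 0}"
      hence "0 < V y" using nonneg[of y] by simp
      moreover obtain n where "dist x y < real n" using reals_Archimedean2 by blast
      ultimately show "y \<in> (\<Union>n. {y \<in> ball x (real n). 0 < V y})" by auto
    qed
    hence "AE y in lebesgue. V y = 0" by (rule AE_I'[OF N])
    with nonzero show False by simp
  qed
  then obtain n where n: "0 < emeasure lebesgue {y \<in> ball x (real n). 0 < V y}" by blast
  define R where "R = real n"
  have Rpos: "R > 0" using n by (auto simp: R_def intro!: Nat.gr0I)
  have cpos: "f R > 0" using gt[OF Rpos, of 0] n R_def by simp
  define M where "M = max 1 (max R (1 / f R))"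
  have Mb: "r \<le> M" if "r \<in> S" for r
  proof (cases "r \<le> R")
    case True thus ?thesis by (simp add: M_def)
  next
    case False
    hence "f R \<le> f r" using mn[OF Rpos] by simp
    hence "r^2 * f R \<le> r^2 * f r" by (simp add: mult_left_mono)
    moreover have "r^2 * f r \<le> 1" using that by (simp add: S_def)
    ultimately have h: "r^2 * f R \<le> 1" by linarith
    show ?thesis
    proof (cases "r \<le> 1")
      case True thus ?thesis by (simp add: M_def)
    next
      case False
      hence "r \<le> r^2" by (simp add: power2_eq_square)
      also have "r^2 \<le> 1 / f R" using h cpos by (simp add: field_simps)
      finally show ?thesis by (simp add: M_def)
    qed
  qed
  have bdd: "bdd_above S" using Mb by (rule bdd_aboveI)
  have Sne: "S \<noteq> {}" using r0S by blast
  define \<rho> where "\<rho> = Sup S"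
  have rhopos: "\<rho> > 0" using cSup_upper[OF r0S bdd] r0pos \<rho>_def by simp
  have down: "s^2 * f s \<le> 1" if "0 < s" "s < \<rho>" for s
  proof -
    have "s < Sup S" using that \<rho>_def by simp
    then obtain r where r: "r \<in> S" "s < r" using less_cSup_iff[OF Sne bdd] by blast
    have "f s \<le> f r" using mn[OF \<open>0 < s\<close>] r by simp
    hence "s^2 * f s \<le> r^2 * f r"
      using r that fnn[of s] by (intro mult_mono power_mono) auto
    thus ?thesis using r by (simp add: S_def)
  qed
  have upper: "f \<rho> \<le> 1 / \<rho>^2"
  proof (rule ccontr)
    assume "\<not> ?thesis"
    then obtain z where z: "1 / \<rho>^2 < z" "z < f \<rho>" using dense by (meson not_le)
    have "1 / \<rho>^2 > 0" using rhopos by simp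
    hence zpos: "z > 0" using z(1) by linarith
    define a where "a = 1 / sqrt z"
    have apos: "a > 0" using zpos by (simp add: a_def)
    have a2: "a^2 = 1 / z" using zpos by (simp add: a_def power_divide)
    have "z * a^2 < z * \<rho>^2" using a2 z(1) zpos rhopos by (simp add: field_simps)
    hence "a^2 < \<rho>^2" using zpos by simp
    hence arho: "a < \<rho>" using rhopos by (simp add: power_less_imp_less_base)
    define s0 where "s0 = (a + \<rho>) / 2"
    have s0: "a < s0" "s0 < \<rho>" using arho by (auto simp: s0_def)
    have "a^2 < s0^2" using s0 apos by (simp add: power_strict_mono)
    hence s0z: "1 < s0^2 * z" using a2 zpos by (simp add: field_simps)
    define sn where "sn k = \<rho> - (\<rho> - s0) / (real k + 1)" for k :: nat
    have sn: "s0 \<le> sn k" "sn k < \<rho>" for k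
    proof -
      have "(\<rho> - s0) / (real k + 1) \<le> \<rho> - s0" using s0 by (simp add: divide_le_eq)
      thus "s0 \<le> sn k" by (simp add: sn_def)
      show "sn k < \<rho>" using s0 by (simp add: sn_def)
    qed
    have snpos: "sn k > 0" for k using sn[of k] s0 apos by linarith
    have "0 < emeasure lebesgue {y \<in> ball x \<rho>. z < V y}" using gt[OF rhopos] z by simp
    moreover have "\<exists>k. 0 < emeasure lebesgue {y \<in> ball x (sn k). z < V y}"
    proof (rule ccontr)
      assume "\<not> ?thesis"
      hence "\<And>k. {y \<in> ball x (sn k). z < V y} \<in> null_sets lebesgue"
        using sm by (simp add: null_sets_def not_gr_zero)
      hence N: "(\<Union>k. {y \<in> ball x (sn k). z < V y}) \<in> null_sets lebesgue" by blast
      have "{y \<in> ball x \<rho>. z < V y} \<subseteq> (\<Union>k. {y \<in> ball x (sn k). z < V y})"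
      proof
        fix y assume y: "y \<in> {y \<in> ball x \<rho>. z < V y}"
        hence d: "dist x y < \<rho>" by simp
        obtain k where k0: "(\<rho> - s0) / (\<rho> - dist x y) < real k"
          using reals_Archimedean2 by blast
        hence k: "(\<rho> - s0) / (\<rho> - dist x y) < real k + 1" by linarith
        have "(\<rho> - s0) / (real k + 1) < \<rho> - dist x y"
          using k d by (simp add: field_simps)
        hence "dist x y < sn k" by (simp add: sn_def)
        thus "y \<in> (\<Union>k. {y \<in> ball x (sn k). z < V y})" using y by auto
      qed
      hence "{y \<in> ball x \<rho>. z < V y} \<in> null_sets lebesgue"
        by (rule null_sets_subset[OF N sm])
      thus False using \<open>0 < emeasure lebesgue {y \<in> ball x \<rho>. z < V y}\<close>
        by (simp add: null_setsD1)
    qed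
    then obtain k where "0 < emeasure lebesgue {y \<in> ball x (sn k). z < V y}" by blast
    hence fz: "z < f (sn k)" using gt[OF snpos[of k]] by simp
    have c1: "s0^2 * z \<le> (sn k)^2 * z" using sn[of k] s0 apos zpos
      by (intro mult_right_mono power_mono) auto
    have c2: "(sn k)^2 * z < (sn k)^2 * f (sn k)" using fz snpos[of k] by simp
    have "1 < (sn k)^2 * f (sn k)" using s0z c1 c2 by linarith
    with down[OF snpos[of k] sn(2)[of k]] show False by simp
  qed
  have "2 * \<rho> \<notin> S"
  proof
    assume "2 * \<rho> \<in> S"
    from cSup_upper[OF this bdd] rhopos show False by (simp add: \<rho>_def)
  qed
  hence "1 < (2 * \<rho>)^2 * f (2 * \<rho>)" using rhopos by (auto simp: S_def)
  also have "\<dots> \<le> (2 * \<rho>)^2 * (D * f \<rho>)" using doubling[OF rhopos, of x] f_def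
    by (intro mult_left_mono) auto
  finally have key: "1 < 4 * \<rho>^2 * D * f \<rho>" by (simp add: power_mult_distrib)
  have Dpos: "D > 0"
  proof (rule ccontr)
    assume "\<not> D > 0"
    hence "D * f \<rho> \<le> 0" using fnn[OF rhopos] by (simp add: mult_nonpos_nonneg)
    moreover have "4 * \<rho>^2 * D * f \<rho> = (4 * \<rho>^2) * (D * f \<rho>)" by simp
    ultimately have "4 * \<rho>^2 * D * f \<rho> \<le> 0"
      by (simp only:) (rule mult_nonneg_nonpos, simp, assumption)
    with key show False by simp
  qed
  have pw: "\<rho> powr (-2) = 1 / \<rho>^2" using rhopos by (simp add: powr_minus powr_realpow divide_inverse)
  have lower: "\<rho> powr (-2) / (4 * D) \<le> f \<rho>"
    using key Dpos rhopos by (simp add: pw field_simps)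
  show "rhoV V x powr (-2) / (4 * D) \<le> Linf_ball V x (rhoV V x)
             \<and> Linf_ball V x (rhoV V x) \<le> rhoV V x powr (-2)"
    using lower upper pw by (simp add: rho_def f_def \<rho>_def)
qed

end
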